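(* Suppose there exists a $\pi_p$-contracting element $\xi\in G$. Then $B^1(G,\pi_p)$ is closed in $Z^1(G,\pi_p)$, i.e. $H^1_{\mathrm{ct}}(G,\pi_p)=\overline H^1_{\mathrm{ct}}(G,\pi_p)$ is Hausdorff.
   Context: $G$ is a locally compact second countable group with left Haar measure $\mu$; $(\pi_0,V)$ is a continuous representation of $G$ on a separable Banach space $V$; for $p>1$, $\pi_p$ is the representation of $G$ on the Bochner space $L^p(G,V)$ given by $(\pi(g)f)(h)=\pi_0(g)(f(hg))$. $Z^1(G,\pi_p)$ is the space of continuous maps $b:G\to L^p(G,V)$ with $b(gh)=b(g)+\pi(g)b(h)$, with the topology of uniform convergence on compacta; $B^1(G,\pi_p)=\{g\mapsto f-\pi(g)f: f\in L^p(G,V)\}$; $\overline H^1_{\mathrm{ct}}$ is the quotient by the closure of $B^1$. An element $\xi$ is $\pi_p$-contracting if $\lim_{n\to\infty}|||\pi(\xi^n)|||_{L^p(G,V)}=0$. *)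

theory Defs
  imports "HOL-Analysis.Analysis"
begin

text \<open>The locally compact second countable group G is written additively (the class
group_add does NOT require commutativity). Haar measure: a Borel measure on G that
is left invariant, finite on compact sets and positive on nonempty open sets
(in a second countable locally compact Hausdorff space such a measure is automatically regular).\<close>

definition left_haar_measure :: "'g::{topological_group_add} measure \<Rightarrow> bool" where
  "left_haar_measure M \<longleftrightarrow>
     sets M = sets borel \<and> space M = UNIV \<and>
     (\<forall>g A. A \<in> sets borel \<longrightarrow> emeasure M ((+) g ` A) = emeasure M A) \<and>
     (\<forall>K. compact K \<longrightarrow> emeasure M K < \<infinity>) \<and>
     (\<forall>U. open U \<and> U \<noteq> {} \<longrightarrow> emeasure M U > 0)"

definition continuous_rep :: "('g::topological_group_add \<Rightarrow> ('v::banach \<Rightarrow>\<^sub>L 'v)) \<Rightarrow> bool" where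
  "continuous_rep \<pi>0 \<longleftrightarrow>
     \<pi>0 0 = id_blinfun \<and>
     (\<forall>g h. \<pi>0 (g + h) = \<pi>0 g o\<^sub>L \<pi>0 h) \<and>
     (\<forall>v. continuous_on UNIV (\<lambda>g. blinfun_apply (\<pi>0 g) v))"

text \<open>Bochner space L^p(G,V): strongly (= Borel, V separable) measurable functions with
integrable p-th power of the norm; elements are handled via representatives, with
equality in L^p meaning equality almost everywhere.\<close>
definition memLp :: "'a measure \<Rightarrow> real \<Rightarrow> ('a \<Rightarrow> 'v::banach) \<Rightarrow> bool" where
  "memLp M p f \<longleftrightarrow> f \<in> borel_measurable M \<and> integrable M (\<lambda>x. norm (f x) powr p)"

definition Lp_norm :: "'a measure \<Rightarrow> real \<Rightarrow> ('a \<Rightarrow> 'v::banach) \<Rightarrow> real" where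
  "Lp_norm M p f = (\<integral>x. norm (f x) powr p \<partial>M) powr (1 / p)"

definition pi_p :: "('g::group_add \<Rightarrow> ('v::banach \<Rightarrow>\<^sub>L 'v)) \<Rightarrow> 'g \<Rightarrow> ('g \<Rightarrow> 'v) \<Rightarrow> ('g \<Rightarrow> 'v)" where
  "pi_p \<pi>0 g f = (\<lambda>h. blinfun_apply (\<pi>0 g) (f (h + g)))"

text \<open>Operator norm of an operator on L^p (in ennreal, so no junk values).\<close>
definition Lp_opnorm :: "'a measure \<Rightarrow> real \<Rightarrow> (('a \<Rightarrow> 'v::banach) \<Rightarrow> ('a \<Rightarrow> 'v)) \<Rightarrow> ennreal" where
  "Lp_opnorm M p T = (SUP f\<in>{f. memLp M p f \<and> Lp_norm M p f \<le> 1}. ennreal (Lp_norm M p (T f)))"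

definition gpow :: "'g::group_add \<Rightarrow> nat \<Rightarrow> 'g" where
  "gpow \<xi> n = ((+) \<xi> ^^ n) 0"

definition pi_p_contracting :: "'g::topological_group_add measure \<Rightarrow> real \<Rightarrow> ('g \<Rightarrow> ('v::banach \<Rightarrow>\<^sub>L 'v)) \<Rightarrow> 'g \<Rightarrow> bool" where
  "pi_p_contracting M p \<pi>0 \<xi> \<longleftrightarrow> (\<lambda>n. Lp_opnorm M p (pi_p \<pi>0 (gpow \<xi> n))) \<longlonglongrightarrow> 0"

definition cocycle :: "'g::topological_group_add measure \<Rightarrow> real \<Rightarrow> ('g \<Rightarrow> ('v::banach \<Rightarrow>\<^sub>L 'v)) \<Rightarrow> ('g \<Rightarrow> 'g \<Rightarrow> 'v) \<Rightarrow> bool" where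
  "cocycle M p \<pi>0 b \<longleftrightarrow>
     (\<forall>g. memLp M p (b g)) \<and>
     (\<forall>g. ((\<lambda>h. Lp_norm M p (\<lambda>x. b h x - b g x)) \<longlongrightarrow> 0) (at g)) \<and>
     (\<forall>g h. AE x in M. b (g + h) x = b g x + pi_p \<pi>0 g (b h) x)"

definition coboundary :: "'g::topological_group_add measure \<Rightarrow> real \<Rightarrow> ('g \<Rightarrow> ('v::banach \<Rightarrow>\<^sub>L 'v)) \<Rightarrow> ('g \<Rightarrow> 'g \<Rightarrow> 'v) \<Rightarrow> bool" where
  "coboundary M p \<pi>0 b \<longleftrightarrow>
     (\<exists>f. memLp M p f \<and> (\<forall>g. AE x in M. b g x = f x - pi_p \<pi>0 g f x))"

definition in_closure_B1 :: "'g::topological_group_add measure \<Rightarrow> real \<Rightarrow> ('g \<Rightarrow> ('v::banach \<Rightarrow>\<^sub>L 'v)) \<Rightarrow> ('g \<Rightarrow> 'g \<Rightarrow> 'v) \<Rightarrow> bool" where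
  "in_closure_B1 M p \<pi>0 b \<longleftrightarrow>
     (\<forall>K. compact K \<longrightarrow> (\<forall>\<epsilon>>0. \<exists>f. memLp M p f \<and>
        (\<forall>g\<in>K. Lp_norm M p (\<lambda>x. b g x - (f x - pi_p \<pi>0 g f x)) < \<epsilon>)))"

end

theory Submission
  imports Defs
begin


lemma sf_compact:
  fixes N :: "'g::{t2_space, second_countable_topology} measure"
  assumes lc: "locally_compact_space (euclidean :: 'g topology)"
    and sN: "sets N = sets borel" and spN: "space N = UNIV"
    and fin: "\<And>K. compact K \<Longrightarrow> emeasure N K < \<infinity>"
  shows "sigma_finite_measure N"
proof
  have "\<forall>x::'g. \<exists>U K. open U \<and> compact K \<and> x \<in> U \<and> U \<subseteq> K"
    using lc unfolding locally_compact_space_def by (simp add: compactin_euclidean_iff)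
  then have "\<exists>U. \<forall>x::'g. \<exists>K. open (U x) \<and> compact K \<and> x \<in> U x \<and> U x \<subseteq> K"
    by (rule choice)
  then obtain U where U0: "\<forall>x::'g. \<exists>K. open (U x) \<and> compact K \<and> x \<in> U x \<and> U x \<subseteq> K"
    by blast
  then have "\<exists>K. \<forall>x::'g. open (U x) \<and> compact (K x) \<and> x \<in> U x \<and> U x \<subseteq> K x"
    by (rule choice)
  then obtain K where UK: "\<forall>x::'g. open (U x) \<and> compact (K x) \<and> x \<in> U x \<and> U x \<subseteq> K x"
    by blast
  have U: "\<And>x. open (U x)" "\<And>x. x \<in> U x" "\<And>x. compact (K x)" "\<And>x. U x \<subseteq> K x"
    using UK by blast+
  have Uo: "\<And>S. S \<in> range U \<Longrightarrow> open S" using U(1) by blast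
  obtain F where F: "F \<subseteq> range U" "countable F" "\<Union>F = \<Union>(range U)"
    by (rule Lindelof[of "range U", OF Uo])
  show "\<exists>A. countable A \<and> A \<subseteq> sets N \<and> \<Union> A = space N \<and> (\<forall>a\<in>A. emeasure N a \<noteq> \<infinity>)"
  proof (intro exI conjI ballI)
    show "countable F" by fact
    show "F \<subseteq> sets N"
    proof
      fix a assume "a \<in> F"
      then have "open a" using F(1) Uo by blast
      then show "a \<in> sets N" unfolding sN by (rule borel_open)
    qed
    have "\<Union>(range U) = UNIV" using U(2) by blast
    then show "\<Union>F = space N" using F(3) spN by simp
    fix a assume "a \<in> F"
    then obtain x where a: "a = U x" using F(1) by blast
    have cl: "K x \<in> sets N" unfolding sN by (rule borel_closed, rule compact_imp_closed, rule U(3))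
    have "emeasure N a \<le> emeasure N (K x)"
      by (rule emeasure_mono) (simp_all add: a U(4) cl)
    also have "\<dots> < \<infinity>" by (rule fin, rule U(3))
    finally show "emeasure N a \<noteq> \<infinity>" by simp
  qed
qed

lemma cmeas:
  assumes "continuous_on UNIV \<phi>" "a \<in> borel_measurable borel"
  shows "(\<lambda>x. a (\<phi> x)) \<in> borel_measurable borel"
  using measurable_compose[OF borel_measurable_continuous_onI[OF assms(1)] assms(2)] .

locale haar =
  fixes M :: "'g::{topological_group_add, t2_space, second_countable_topology} measure"
  assumes lc: "locally_compact_space (euclidean :: 'g topology)"
    and H: "left_haar_measure M"
begin

lemma sM: "sets M = sets borel" and spM: "space M = UNIV"
  and invM: "A \<in> sets borel \<Longrightarrow> emeasure M ((+) g ` A) = emeasure M A"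
  and finM: "compact K \<Longrightarrow> emeasure M K < \<infinity>"
  and posM: "open U \<Longrightarrow> U \<noteq> {} \<Longrightarrow> emeasure M U > 0"
  using H unfolding left_haar_measure_def by auto

lemma measM: "f \<in> borel_measurable M \<longleftrightarrow> f \<in> borel_measurable borel"
  by (simp add: measurable_cong_sets[OF sM refl])

lemma cont_measM: "continuous_on UNIV f \<Longrightarrow> f \<in> measurable M M"
  using borel_measurable_continuous_onI measurable_cong_sets[OF sM sM] by blast

lemma sfM: "sigma_finite_measure M"
  by (rule sf_compact[OF lc sM spM finM])

lemma distr_left: "distr M M ((+) g) = M"
proof (rule measure_eqI)
  show "sets (distr M M ((+) g)) = sets M" by simp
  fix A assume A: "A \<in> sets (distr M M ((+) g))"
  have m: "((+) g) \<in> measurable M M" by (intro cont_measM continuous_intros)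
  have eq: "(+) g -` A \<inter> space M = (+) (-g) ` A"
  proof (intro set_eqI iffI)
    fix x assume "x \<in> (+) g -` A \<inter> space M"
    then have "g + x \<in> A" by simp
    moreover have "x = -g + (g + x)" by simp
    ultimately show "x \<in> (+) (-g) ` A" by (rule image_eqI[rotated])
  next
    fix x assume "x \<in> (+) (-g) ` A"
    then obtain y where "y \<in> A" "x = -g + y" by auto
    then show "x \<in> (+) g -` A \<inter> space M" by (simp add: spM)
  qed
  have "emeasure (distr M M ((+) g)) A = emeasure M ((+) g -` A \<inter> space M)"
    by (rule emeasure_distr[OF m]) (use A in simp)
  also have "\<dots> = emeasure M ((+) (-g) ` A)" by (simp only: eq)
  also have "\<dots> = emeasure M A" by (rule invM) (use A sM in simp)
  finally show "emeasure (distr M M ((+) g)) A = emeasure M A" .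
qed

lemma nn_left:
  assumes "F \<in> borel_measurable M"
  shows "(\<integral>\<^sup>+x. F (g + x) \<partial>M) = integral\<^sup>N M F"
proof -
  have m: "((+) g) \<in> measurable M M" by (intro cont_measM continuous_intros)
  have "integral\<^sup>N (distr M M ((+) g)) F = (\<integral>\<^sup>+x. F (g + x) \<partial>M)"
    by (rule nn_integral_distr[OF m]) (use assms in simp)
  then show ?thesis by (simp add: distr_left)
qed


lemma key:
  fixes N :: "'g measure" and a c :: "'g \<Rightarrow> ennreal"
  assumes sN: "sets N = sets borel" and spN: "space N = UNIV" and sfN: "sigma_finite_measure N"
    and Ninv: "\<And>g F. F \<in> borel_measurable borel \<Longrightarrow> (\<integral>\<^sup>+x. F (g + x) \<partial>N) = integral\<^sup>N N F"
    and a: "a \<in> borel_measurable borel" and c: "c \<in> borel_measurable borel"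
  shows "integral\<^sup>N M a * integral\<^sup>N N c = (\<integral>\<^sup>+y. a (-y) * (\<integral>\<^sup>+x. c (x + y) \<partial>M) \<partial>N)"
proof -
  interpret sfM: sigma_finite_measure M by (rule sfM)
  interpret P: pair_sigma_finite M N by (intro pair_sigma_finite.intro sfM sfN)
  have prod: "sets (M \<Otimes>\<^sub>M N) = sets borel"
    using sets_pair_measure_cong[OF sM sN] borel_prod by metis
  have pm: "\<And>f. f \<in> borel_measurable (M \<Otimes>\<^sub>M N) \<longleftrightarrow> f \<in> borel_measurable borel"
    by (simp add: measurable_cong_sets[OF prod refl])
  have mN: "\<And>f. f \<in> borel_measurable N \<longleftrightarrow> f \<in> borel_measurable borel"
    by (simp add: measurable_cong_sets[OF sN refl])
  have m1: "case_prod (\<lambda>x y. a (-y) * c (x + y)) \<in> borel_measurable (M \<Otimes>\<^sub>M N)"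
  proof -
    have "(\<lambda>p. a (- snd p)) \<in> borel_measurable borel"
      by (rule cmeas[OF _ a]) (intro continuous_intros)
    moreover have "(\<lambda>p. c (fst p + snd p)) \<in> borel_measurable borel"
      by (rule cmeas[OF _ c]) (intro continuous_intros)
    ultimately have 1: "(\<lambda>p. a (- snd p) * c (fst p + snd p)) \<in> borel_measurable borel"
      by (rule borel_measurable_times_ennreal)
    have eq: "case_prod (\<lambda>x y. a (-y) * c (x + y)) = (\<lambda>p. a (- snd p) * c (fst p + snd p))"
      by (simp add: fun_eq_iff)
    show ?thesis unfolding eq pm by (rule 1)
  qed
  have m2: "case_prod (\<lambda>x z. a (-z + x) * c z) \<in> borel_measurable (M \<Otimes>\<^sub>M N)"
  proof -
    have "(\<lambda>p. a (- snd p + fst p)) \<in> borel_measurable borel"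
      by (rule cmeas[OF _ a]) (intro continuous_intros)
    moreover have "(\<lambda>p. c (snd p)) \<in> borel_measurable borel"
      by (rule cmeas[OF _ c]) (intro continuous_intros)
    ultimately have 1: "(\<lambda>p. a (- snd p + fst p) * c (snd p)) \<in> borel_measurable borel"
      by (rule borel_measurable_times_ennreal)
    have eq: "case_prod (\<lambda>x z. a (-z + x) * c z) = (\<lambda>p. a (- snd p + fst p) * c (snd p))"
      by (simp add: fun_eq_iff)
    show ?thesis unfolding eq pm by (rule 1)
  qed
  have "(\<integral>\<^sup>+y. a (-y) * (\<integral>\<^sup>+x. c (x + y) \<partial>M) \<partial>N) = (\<integral>\<^sup>+y. \<integral>\<^sup>+x. a (-y) * c (x + y) \<partial>M \<partial>N)"
  proof (rule nn_integral_cong)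
    fix y
    have "(\<lambda>x. c (x + y)) \<in> borel_measurable M"
      unfolding measM by (rule cmeas[OF _ c]) (intro continuous_intros)
    then show "a (-y) * (\<integral>\<^sup>+x. c (x + y) \<partial>M) = (\<integral>\<^sup>+x. a (-y) * c (x + y) \<partial>M)"
      by (simp add: nn_integral_cmult)
  qed
  also have "\<dots> = (\<integral>\<^sup>+x. \<integral>\<^sup>+y. a (-y) * c (x + y) \<partial>N \<partial>M)"
    by (rule P.Fubini'[OF m1])
  also have "\<dots> = (\<integral>\<^sup>+x. \<integral>\<^sup>+z. a (-z + x) * c z \<partial>N \<partial>M)"
  proof (rule nn_integral_cong)
    fix x
    have F: "(\<lambda>z. a (-z + x) * c z) \<in> borel_measurable borel"
    proof (rule borel_measurable_times_ennreal)
      show "(\<lambda>z. a (-z + x)) \<in> borel_measurable borel"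
        by (rule cmeas[OF _ a]) (intro continuous_intros)
      show "(\<lambda>z. c z) \<in> borel_measurable borel" using c by simp
    qed
    have "(\<integral>\<^sup>+y. a (-(x + y) + x) * c (x + y) \<partial>N) = (\<integral>\<^sup>+z. a (-z + x) * c z \<partial>N)"
      by (rule Ninv[OF F])
    moreover have eq: "\<And>y. -(x + y) + x = - y"
      by (simp only: minus_add add.assoc add.left_inverse add_0_right)
    ultimately show "(\<integral>\<^sup>+y. a (-y) * c (x + y) \<partial>N) = (\<integral>\<^sup>+z. a (-z + x) * c z \<partial>N)"
      by (simp only: eq)
  qed
  also have "\<dots> = (\<integral>\<^sup>+z. \<integral>\<^sup>+x. a (-z + x) * c z \<partial>M \<partial>N)"
    by (rule P.Fubini'[OF m2, symmetric])
  also have "\<dots> = (\<integral>\<^sup>+z. \<integral>\<^sup>+x. a x * c z \<partial>M \<partial>N)"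
  proof (rule nn_integral_cong)
    fix z
    have "(\<lambda>x. a x * c z) \<in> borel_measurable M"
      unfolding measM by (intro borel_measurable_times_ennreal a) simp
    then show "(\<integral>\<^sup>+x. a (-z + x) * c z \<partial>M) = (\<integral>\<^sup>+x. a x * c z \<partial>M)"
      by (rule nn_left)
  qed
  also have "\<dots> = (\<integral>\<^sup>+z. integral\<^sup>N M a * c z \<partial>N)"
    by (intro nn_integral_cong) (simp add: nn_integral_multc measM a)
  also have "\<dots> = integral\<^sup>N M a * integral\<^sup>N N c"
    by (simp add: nn_integral_cmult mN c)
  finally show ?thesis by (rule sym)
qed


lemma compact_shift: "compact (K::'g set) \<Longrightarrow> compact {x. x + y \<in> K}"
proof -
  assume K: "compact K"
  have "{x. x + y \<in> K} = (\<lambda>z. z + - y) ` K"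
  proof (intro set_eqI iffI)
    fix x assume "x \<in> {x. x + y \<in> K}"
    then have "x + y \<in> K" by simp
    moreover have "x = (x + y) + - y" by (simp add: add.assoc)
    ultimately show "x \<in> (\<lambda>z. z + - y) ` K" by (rule image_eqI[rotated])
  next
    fix x assume "x \<in> (\<lambda>z. z + - y) ` K"
    then obtain z where "z \<in> K" "x = z + - y" by blast
    then show "x \<in> {x. x + y \<in> K}" by (simp add: add.assoc)
  qed
  moreover have "compact ((\<lambda>z. z + - y) ` K)"
    by (rule compact_continuous_image[OF _ K]) (intro continuous_intros)
  ultimately show ?thesis by simp
qed

lemma right_trans:
  "\<exists>r. r < \<infinity> \<and> (\<forall>F. F \<in> borel_measurable borel \<longrightarrow>
      (\<integral>\<^sup>+x. F (x + g) \<partial>M) = r * integral\<^sup>N M F)"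
proof -
  define N where "N = distr M M (\<lambda>x. x + g)"
  have mg: "(\<lambda>x. x + g) \<in> measurable M M" by (intro cont_measM continuous_intros)
  have sN: "sets N = sets borel" by (simp add: N_def sM)
  have spN: "space N = UNIV" by (simp add: N_def spM)
  have mN: "\<And>f. f \<in> borel_measurable N \<longleftrightarrow> f \<in> borel_measurable borel"
    by (simp add: measurable_cong_sets[OF sN refl])
  have intN: "\<And>F. F \<in> borel_measurable borel \<Longrightarrow> integral\<^sup>N N F = (\<integral>\<^sup>+x. F (x + g) \<partial>M)"
  proof -
    fix F :: "'g \<Rightarrow> ennreal" assume F: "F \<in> borel_measurable borel"
    have "F \<in> borel_measurable (distr M M (\<lambda>x. x + g))" using F by (simp add: N_def measM)
    then show "integral\<^sup>N N F = (\<integral>\<^sup>+x. F (x + g) \<partial>M)"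
      unfolding N_def by (rule nn_integral_distr[OF mg])
  qed
  have Ninv: "\<And>h F. F \<in> borel_measurable borel \<Longrightarrow> (\<integral>\<^sup>+x. F (h + x) \<partial>N) = integral\<^sup>N N F"
  proof -
    fix h and F :: "'g \<Rightarrow> ennreal" assume F: "F \<in> borel_measurable borel"
    have F1: "(\<lambda>x. F (h + x)) \<in> borel_measurable borel"
      by (rule cmeas[OF _ F]) (intro continuous_intros)
    have F2: "(\<lambda>y. F (y + g)) \<in> borel_measurable M"
      unfolding measM by (rule cmeas[OF _ F]) (intro continuous_intros)
    have "(\<integral>\<^sup>+x. F (h + x) \<partial>N) = (\<integral>\<^sup>+x. F (h + (x + g)) \<partial>M)"
      by (rule intN[OF F1])
    also have "\<dots> = (\<integral>\<^sup>+x. (\<lambda>y. F (y + g)) (h + x) \<partial>M)"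
      by (simp add: add.assoc)
    also have "\<dots> = (\<integral>\<^sup>+y. F (y + g) \<partial>M)"
      by (rule nn_left[OF F2])
    also have "\<dots> = integral\<^sup>N N F" by (rule intN[OF F, symmetric])
    finally show "(\<integral>\<^sup>+x. F (h + x) \<partial>N) = integral\<^sup>N N F" .
  qed
  have finN: "\<And>K. compact K \<Longrightarrow> emeasure N K < \<infinity>"
  proof -
    fix K :: "'g set" assume K: "compact K"
    have Kb: "K \<in> sets M" unfolding sM by (rule borel_closed, rule compact_imp_closed, rule K)
    have "emeasure N K = emeasure M ((\<lambda>x. x + g) -` K \<inter> space M)"
      unfolding N_def by (rule emeasure_distr[OF mg Kb])
    also have "(\<lambda>x. x + g) -` K \<inter> space M = {x. x + g \<in> K}" by (auto simp: spM)
    also have "emeasure M {x. x + g \<in> K} < \<infinity>" by (rule finM, rule compact_shift, rule K)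
    finally show "emeasure N K < \<infinity>" .
  qed
  have sfN: "sigma_finite_measure N" by (rule sf_compact[OF lc sN spN finN])
  have "\<exists>U C. open U \<and> compact C \<and> (0::'g) \<in> U \<and> U \<subseteq> C"
    using lc unfolding locally_compact_space_def by (simp add: compactin_euclidean_iff)
  then obtain U C where U: "open U" "compact C" "(0::'g) \<in> U" "U \<subseteq> C" by blast
  have Cb: "C \<in> sets borel" by (rule borel_closed, rule compact_imp_closed, rule U(2))
  have ic: "indicator C \<in> borel_measurable borel" using Cb by simp
  define Mf where "Mf y = (\<integral>\<^sup>+x. indicator C (x + y) \<partial>M)" for y
  have Mf_eq: "Mf y = emeasure M {x. x + y \<in> C}" for y
  proof -
    have "{x. x + y \<in> C} = (\<lambda>x. x + y) -` C" by auto
    then have b: "{x. x + y \<in> C} \<in> sets M"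
      using measurable_sets[OF cont_measM[of "\<lambda>x. x + y"], of C] Cb sM spM
      by (simp add: continuous_on_add continuous_on_id continuous_on_const)
    have "Mf y = (\<integral>\<^sup>+x. indicator {x. x + y \<in> C} x \<partial>M)"
      unfolding Mf_def by (rule nn_integral_cong) (simp add: indicator_def)
    also have "\<dots> = emeasure M {x. x + y \<in> C}" by (rule nn_integral_indicator[OF b])
    finally show ?thesis .
  qed
  have Mf_pos: "Mf y > 0" for y
  proof -
    have o: "open {x. x + y \<in> U}"
    proof -
      have "{x. x + y \<in> U} = (\<lambda>x. x + y) -` U" by auto
      moreover have "open ((\<lambda>x. x + y) -` U)"
        by (rule continuous_open_vimage[OF U(1)]) (intro continuous_intros)
      ultimately show ?thesis by simp
    qed
    have ne: "-y \<in> {x. x + y \<in> U}" using U(3) by simp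
    have "0 < emeasure M {x. x + y \<in> U}" by (rule posM[OF o]) (use ne in blast)
    also have "\<dots> \<le> emeasure M {x. x + y \<in> C}"
    proof (rule emeasure_mono)
      show "{x. x + y \<in> U} \<subseteq> {x. x + y \<in> C}" using U(4) by blast
      show "{x. x + y \<in> C} \<in> sets M" unfolding sM
        by (rule borel_closed, rule compact_imp_closed, rule compact_shift, rule U(2))
    qed
    finally show ?thesis by (simp add: Mf_eq)
  qed
  have Mf_fin: "Mf y < \<infinity>" for y
    unfolding Mf_eq by (rule finM, rule compact_shift, rule U(2))
  have Mf_meas: "Mf \<in> borel_measurable borel"
  proof -
    interpret sfM: sigma_finite_measure M by (rule sfM)
    have prod: "sets (borel \<Otimes>\<^sub>M M) = sets (borel :: ('g \<times> 'g) measure)"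
      using sets_pair_measure_cong[OF refl sM] borel_prod by metis
    have "(\<lambda>p. indicator C (snd p + fst p) :: ennreal) \<in> borel_measurable borel"
      by (rule cmeas[OF _ ic]) (intro continuous_intros)
    then have "case_prod (\<lambda>y x. indicator C (x + y) :: ennreal) \<in> borel_measurable (borel \<Otimes>\<^sub>M M)"
      by (simp add: measurable_cong_sets[OF prod refl] split_beta')
    then show ?thesis unfolding Mf_def[abs_def]
      by (rule sfM.borel_measurable_nn_integral)
  qed
  define cN where "cN = emeasure N C"
  define cM where "cM = emeasure M C"
  have cN_fin: "cN < \<infinity>" unfolding cN_def by (rule finN, rule U(2))
  have cM_fin: "cM < \<infinity>" unfolding cM_def by (rule finM, rule U(2))
  have cM_pos: "cM > 0"
  proof -
    have "0 < emeasure M U" by (rule posM[OF U(1)]) (use U(3) in blast)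
    also have "\<dots> \<le> cM" unfolding cM_def by (rule emeasure_mono[OF U(4)]) (simp add: sM Cb)
    finally show ?thesis .
  qed
  show ?thesis
  proof (intro exI conjI allI impI)
    show "cN / cM < \<infinity>"
    proof -
      have "cN \<noteq> top" "cM \<noteq> 0" using cN_fin cM_pos by auto
      then have "cN / cM \<noteq> top" by (simp add: ennreal_divide_eq_top_iff)
      then show ?thesis by (simp add: less_top)
    qed
    fix F :: "'g \<Rightarrow> ennreal" assume F: "F \<in> borel_measurable borel"
    define a where "a z = F (-z) / Mf (-z)" for z
    have am: "a \<in> borel_measurable borel"
    proof -
      have "(\<lambda>z. F (-z)) \<in> borel_measurable borel" by (rule cmeas[OF _ F]) (intro continuous_intros)
      moreover have "(\<lambda>z. Mf (-z)) \<in> borel_measurable borel" by (rule cmeas[OF _ Mf_meas]) (intro continuous_intros)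
      ultimately show ?thesis unfolding a_def[abs_def] by (rule borel_measurable_divide_ennreal)
    qed
    have aM: "a (-y) * Mf y = F y" for y
    proof -
      have "a (-y) * Mf y = F y / Mf y * Mf y" by (simp add: a_def)
      also have "\<dots> = F y * (Mf y / Mf y)" by (rule ennreal_divide_times)
      also have "Mf y / Mf y = 1" using Mf_pos[of y] Mf_fin[of y] by simp
      finally show ?thesis by simp
    qed
    have k1: "integral\<^sup>N M a * integral\<^sup>N N (indicator C) = (\<integral>\<^sup>+y. a (-y) * Mf y \<partial>N)"
      unfolding Mf_def by (rule key[OF sN spN sfN Ninv am ic])
    have k2: "integral\<^sup>N M a * integral\<^sup>N M (indicator C) = (\<integral>\<^sup>+y. a (-y) * Mf y \<partial>M)"
      unfolding Mf_def by (rule key[OF sM spM sfM _ am ic]) (rule nn_left, simp add: measM)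
    have e1: "integral\<^sup>N M a * cN = integral\<^sup>N N F"
      using k1 Cb sN by (simp add: aM cN_def)
    have e2: "integral\<^sup>N M a * cM = integral\<^sup>N M F"
      using k2 Cb sM by (simp add: aM cM_def)
    have "(\<integral>\<^sup>+x. F (x + g) \<partial>M) = integral\<^sup>N N F" by (rule intN[OF F, symmetric])
    also have "\<dots> = integral\<^sup>N M a * cN" by (rule e1[symmetric])
    also have "\<dots> = integral\<^sup>N M a * cM * (cN / cM)"
    proof -
      have "cM * (cN / cM) = cM * cN / cM" by (rule ennreal_times_divide)
      also have "\<dots> = cN * cM / cM" by (simp add: mult.commute)
      also have "\<dots> = cN" by (rule mult_divide_eq_ennreal) (use cM_pos cM_fin in auto)
      finally show ?thesis by (simp add: mult.assoc)
    qed
    also have "\<dots> = cN / cM * integral\<^sup>N M F" unfolding e2 by (rule mult.commute)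
    finally show "(\<integral>\<^sup>+x. F (x + g) \<partial>M) = cN / cM * integral\<^sup>N M F" .
  qed
qed

end




definition Q :: "'a measure \<Rightarrow> real \<Rightarrow> ('a \<Rightarrow> 'v::banach) \<Rightarrow> ennreal" where
  "Q M p f = (\<integral>\<^sup>+x. ennreal (norm (f x) powr p) \<partial>M)"

lemma memLp_iff:
  fixes f :: "'a \<Rightarrow> 'v::{banach, second_countable_topology}"
  shows "memLp M p f \<longleftrightarrow> f \<in> borel_measurable M \<and> Q M p f < \<infinity>"
proof
  assume "memLp M p f"
  then have f: "f \<in> borel_measurable M" and i: "integrable M (\<lambda>x. norm (f x) powr p)"
    by (auto simp: memLp_def)
  from i have "(\<integral>\<^sup>+x. ennreal (norm (norm (f x) powr p)) \<partial>M) < \<infinity>"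
    by (simp add: integrable_iff_bounded)
  then show "f \<in> borel_measurable M \<and> Q M p f < \<infinity>" using f by (simp add: Q_def)
next
  assume a: "f \<in> borel_measurable M \<and> Q M p f < \<infinity>"
  have "(\<lambda>x. norm (f x) powr p) \<in> borel_measurable M" using conjunct1[OF a] by measurable
  then have "integrable M (\<lambda>x. norm (f x) powr p)"
    using a by (simp add: integrable_iff_bounded Q_def)
  then show "memLp M p f" using a by (simp add: memLp_def)
qed

lemma Q_Lp:
  fixes f :: "'a \<Rightarrow> 'v::{banach, second_countable_topology}"
  assumes "memLp M p f" "p > 0"
  shows "Q M p f = ennreal (Lp_norm M p f powr p)"
proof -
  have f: "f \<in> borel_measurable M" and q: "Q M p f < \<infinity>" using assms memLp_iff by auto
  have m: "(\<lambda>x. norm (f x) powr p) \<in> borel_measurable M" using f by measurable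
  have I: "(\<integral>x. norm (f x) powr p \<partial>M) = enn2real (Q M p f)"
    unfolding Q_def by (rule integral_eq_nn_integral[OF m]) simp
  have I0: "(\<integral>x. norm (f x) powr p \<partial>M) \<ge> 0" by (simp add: integral_nonneg)
  have "Lp_norm M p f powr p = (\<integral>x. norm (f x) powr p \<partial>M)"
    unfolding Lp_norm_def using assms(2) I0 by (simp add: powr_powr)
  then show ?thesis using I q by (simp add: less_top)
qed

lemma Q_cong: "AE x in M. f x = g x \<Longrightarrow> Q M p f = Q M p g"
  unfolding Q_def by (rule nn_integral_cong_AE) auto

lemma Q_scale:
  fixes f :: "'a \<Rightarrow> 'v::{banach, second_countable_topology}"
  assumes p: "p > 0" and f: "f \<in> borel_measurable M"
  shows "Q M p (\<lambda>x. c *\<^sub>R f x) = ennreal (\<bar>c\<bar> powr p) * Q M p f"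
proof -
  have "Q M p (\<lambda>x. c *\<^sub>R f x) = (\<integral>\<^sup>+x. ennreal (\<bar>c\<bar> powr p) * ennreal (norm (f x) powr p) \<partial>M)"
    unfolding Q_def by (rule nn_integral_cong) (simp add: powr_mult ennreal_mult)
  also have "\<dots> = ennreal (\<bar>c\<bar> powr p) * Q M p f"
    unfolding Q_def by (rule nn_integral_cmult) (use f in measurable)
  finally show ?thesis .
qed

lemma pow_add_le:
  fixes a b :: real
  assumes "a \<ge> 0" "b \<ge> 0" "p > 0"
  shows "(a + b) powr p \<le> 2 powr p * (a powr p + b powr p)"
proof -
  have "a + b \<le> 2 * max a b" by simp
  then have "(a + b) powr p \<le> (2 * max a b) powr p"
    using assms by (intro powr_mono2) auto
  also have "\<dots> = 2 powr p * max a b powr p" using assms by (simp add: powr_mult)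
  also have "max a b powr p \<le> a powr p + b powr p"
    by (cases "a \<le> b") (auto simp: max_def)
  then have "2 powr p * max a b powr p \<le> 2 powr p * (a powr p + b powr p)" by simp
  finally show ?thesis .
qed

lemma Q_add:
  fixes f g :: "'a \<Rightarrow> 'v::{banach, second_countable_topology}"
  assumes f: "f \<in> borel_measurable M" and g: "g \<in> borel_measurable M" and p: "p > 0"
  shows "Q M p (\<lambda>x. f x + g x) \<le> ennreal (2 powr p) * (Q M p f + Q M p g)"
proof -
  have "Q M p (\<lambda>x. f x + g x) \<le> (\<integral>\<^sup>+x. ennreal (2 powr p) * (ennreal (norm (f x) powr p) + ennreal (norm (g x) powr p)) \<partial>M)"
    unfolding Q_def
  proof (rule nn_integral_mono)
    fix x
    have "norm (f x + g x) powr p \<le> (norm (f x) + norm (g x)) powr p"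
      using p by (intro powr_mono2) (auto simp: norm_triangle_ineq)
    also have "\<dots> \<le> 2 powr p * (norm (f x) powr p + norm (g x) powr p)"
      using p by (intro pow_add_le) auto
    finally show "ennreal (norm (f x + g x) powr p) \<le> ennreal (2 powr p) * (ennreal (norm (f x) powr p) + ennreal (norm (g x) powr p))"
      by (simp add: ennreal_mult[symmetric] ennreal_plus[symmetric] del: ennreal_plus)
  qed
  also have "\<dots> = ennreal (2 powr p) * (Q M p f + Q M p g)"
    unfolding Q_def using f g
    by (simp add: nn_integral_cmult nn_integral_add)
  finally show ?thesis .
qed

lemma Q_minus: "Q M p (\<lambda>x. - f x) = Q M p f"
  by (simp add: Q_def)

lemma Q_diff:
  fixes f g :: "'a \<Rightarrow> 'v::{banach, second_countable_topology}"
  assumes f: "f \<in> borel_measurable M" and g: "g \<in> borel_measurable M" and p: "p > 0"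
  shows "Q M p (\<lambda>x. f x - g x) \<le> ennreal (2 powr p) * (Q M p f + Q M p g)"
proof -
  have "Q M p (\<lambda>x. f x + - g x) \<le> ennreal (2 powr p) * (Q M p f + Q M p (\<lambda>x. - g x))"
    by (rule Q_add[OF f _ p]) (use g in measurable)
  then show ?thesis by (simp add: Q_minus)
qed

lemma Q_zero:
  fixes f :: "'a \<Rightarrow> 'v::{banach, second_countable_topology}"
  assumes f: "f \<in> borel_measurable M" and p: "p > 0" and z: "Q M p f = 0"
  shows "AE x in M. f x = 0"
proof -
  have "(\<lambda>x. ennreal (norm (f x) powr p)) \<in> borel_measurable M" using f by measurable
  then have "AE x in M. ennreal (norm (f x) powr p) = 0"
    using z unfolding Q_def by (simp add: nn_integral_0_iff_AE)
  then show ?thesis by eventually_elim (use p in simp)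
qed

lemma memLp_add:
  fixes f g :: "'a \<Rightarrow> 'v::{banach, second_countable_topology}"
  assumes "memLp M p f" "memLp M p g" "p > 0"
  shows "memLp M p (\<lambda>x. f x + g x)" "memLp M p (\<lambda>x. f x - g x)"
proof -
  have f: "f \<in> borel_measurable M" "Q M p f < \<infinity>" and g: "g \<in> borel_measurable M" "Q M p g < \<infinity>"
    using assms memLp_iff by auto
  have "ennreal (2 powr p) * (Q M p f + Q M p g) < \<infinity>"
    using f g by (simp add: ennreal_mult_less_top less_top)
  then show "memLp M p (\<lambda>x. f x + g x)" "memLp M p (\<lambda>x. f x - g x)"
    using Q_add[OF f(1) g(1) assms(3)] Q_diff[OF f(1) g(1) assms(3)] f g
    by (auto simp: memLp_iff)
qed

lemma memLp_scale:
  fixes f :: "'a \<Rightarrow> 'v::{banach, second_countable_topology}"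
  assumes "memLp M p f" "p > 0"
  shows "memLp M p (\<lambda>x. c *\<^sub>R f x)"
proof -
  have f: "f \<in> borel_measurable M" "Q M p f < \<infinity>" using assms memLp_iff by auto
  then show ?thesis using assms(2) by (auto simp: memLp_iff Q_scale ennreal_mult_less_top less_top)
qed


lemma pow2_powr: "(2 ^ j * a) powr p = (2 powr p) ^ j * a powr p" for a p :: real
proof -
  have e: "(2::real) ^ j = 2 powr (real j)" by (simp add: powr_realpow)
  have "((2::real) ^ j) powr p = (2 powr p) ^ j" unfolding e by (simp add: powr_powr powr_power mult.commute)
  then show ?thesis by (simp add: powr_mult)
qed

lemma series_Lp:
  fixes d :: "nat \<Rightarrow> 'a \<Rightarrow> 'v::{banach, second_countable_topology}"
  assumes p: "p > 0" and dm: "\<And>j. d j \<in> borel_measurable M"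
    and dQ: "\<And>j. ennreal ((2 powr p) ^ j) * Q M p (d j) \<le> ennreal (C * (1/2) ^ j)" and C: "0 \<le> C"
  shows "AE x in M. summable (\<lambda>j. norm (d j x))" "memLp M p (\<lambda>x. \<Sum>j. d j x)"
proof -
  define Gt where "Gt j x = ennreal ((2 powr p) ^ j * norm (d j x) powr p)" for j x
  define G where "G x = (\<Sum>j. Gt j x)" for x
  have Gtm: "\<And>j. Gt j \<in> borel_measurable M" unfolding Gt_def[abs_def] using dm by measurable
  have Gm: "G \<in> borel_measurable M" unfolding G_def[abs_def] using Gtm by measurable
  have intGt: "integral\<^sup>N M (Gt j) = ennreal ((2 powr p) ^ j) * Q M p (d j)" for j
  proof -
    have "integral\<^sup>N M (Gt j) = (\<integral>\<^sup>+x. ennreal ((2 powr p) ^ j) * ennreal (norm (d j x) powr p) \<partial>M)"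
      unfolding Gt_def by (rule nn_integral_cong) (simp add: ennreal_mult)
    also have "\<dots> = ennreal ((2 powr p) ^ j) * Q M p (d j)"
      unfolding Q_def by (rule nn_integral_cmult) (use dm in measurable)
    finally show ?thesis .
  qed
  have geo: "(\<Sum>j. C * (1/2::real) ^ j) = C * 2"
    by (simp add: suminf_mult[OF summable_geometric] suminf_geometric)
  have "integral\<^sup>N M G = (\<Sum>j. integral\<^sup>N M (Gt j))"
    unfolding G_def by (rule nn_integral_suminf[OF Gtm])
  also have "\<dots> \<le> (\<Sum>j. ennreal (C * (1/2) ^ j))"
    by (rule suminf_le) (simp_all add: intGt dQ)
  also have "\<dots> = ennreal (C * 2)"
    using C by (simp add: suminf_ennreal2 summable_mult summable_geometric geo)
  finally have intG: "integral\<^sup>N M G \<le> ennreal (C * 2)" .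
  then have "integral\<^sup>N M G \<noteq> \<infinity>" by (auto simp: top_unique)
  then have AEG: "AE x in M. G x \<noteq> \<infinity>" by (rule nn_integral_PInf_AE[OF Gm])
  have good: "summable (\<lambda>j. norm (d j x)) \<and> ennreal (norm (\<Sum>j. d j x) powr p) \<le> ennreal (2 powr p) * G x"
    if Gx: "G x \<noteq> \<infinity>" for x
  proof -
    define R where "R = enn2real (G x)"
    have GR: "G x = ennreal R" using Gx by (simp add: R_def ennreal_enn2real_if less_top)
    have R0: "R \<ge> 0" by (simp add: R_def)
    define m where "m = R powr (1/p)"
    have bd: "norm (d j x) \<le> m * (1/2) ^ j" for j
    proof -
      have "Gt j x \<le> G x" unfolding G_def
        using sum_le_suminf[of "\<lambda>j. Gt j x" "{j}"] by (simp add: summableI)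
      then have "(2 powr p) ^ j * norm (d j x) powr p \<le> R"
        using R0 by (simp add: GR Gt_def)
      then have "(2 ^ j * norm (d j x)) powr p \<le> R" by (simp add: pow2_powr)
      then have "((2 ^ j * norm (d j x)) powr p) powr (1/p) \<le> R powr (1/p)"
        using p by (intro powr_mono2) auto
      then have "2 ^ j * norm (d j x) \<le> m" using p by (simp add: powr_powr m_def)
      then show ?thesis by (simp add: field_simps)
    qed
    have sg: "summable (\<lambda>j. m * (1/2::real) ^ j)" by (intro summable_mult summable_geometric) simp
    have sn: "summable (\<lambda>j. norm (d j x))"
      by (rule summable_comparison_test[OF _ sg]) (use bd in auto)
    have "norm (\<Sum>j. d j x) \<le> (\<Sum>j. norm (d j x))" by (rule summable_norm[OF sn])
    also have "\<dots> \<le> (\<Sum>j. m * (1/2) ^ j)" by (rule suminf_le[OF bd sn sg])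
    also have "\<dots> = m * 2" by (simp add: suminf_mult[OF summable_geometric] suminf_geometric)
    finally have n2: "norm (\<Sum>j. d j x) \<le> m * 2" .
    have "norm (\<Sum>j. d j x) powr p \<le> (m * 2) powr p" using p by (intro powr_mono2 n2) auto
    also have "\<dots> = 2 powr p * R" using R0 p by (simp add: powr_mult m_def powr_powr mult.commute)
    finally have "norm (\<Sum>j. d j x) powr p \<le> 2 powr p * R" .
    then have "ennreal (norm (\<Sum>j. d j x) powr p) \<le> ennreal (2 powr p * R)" by (rule ennreal_leI)
    then show ?thesis using sn R0 by (simp add: GR ennreal_mult)
  qed
  show "AE x in M. summable (\<lambda>j. norm (d j x))" using AEG by eventually_elim (use good in blast)
  have fm: "(\<lambda>x. \<Sum>j. d j x) \<in> borel_measurable M" using dm by measurable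
  have "Q M p (\<lambda>x. \<Sum>j. d j x) \<le> (\<integral>\<^sup>+x. ennreal (2 powr p) * G x \<partial>M)"
    unfolding Q_def by (rule nn_integral_mono_AE) (use AEG in \<open>eventually_elim, use good in blast\<close>)
  also have "\<dots> = ennreal (2 powr p) * integral\<^sup>N M G" by (rule nn_integral_cmult[OF Gm])
  also have "\<dots> \<le> ennreal (2 powr p) * ennreal (C * 2)" by (rule mult_left_mono[OF intG]) simp
  also have "\<dots> < \<infinity>" by (simp add: ennreal_mult_less_top)
  finally show "memLp M p (\<lambda>x. \<Sum>j. d j x)" using fm by (simp add: memLp_iff)
qed


lemma Lp_norm_scale:
  assumes p: "p > 0"
  shows "Lp_norm M p (\<lambda>x. c *\<^sub>R f x) = \<bar>c\<bar> * Lp_norm M p f"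
proof -
  have "(\<integral>x. norm (c *\<^sub>R f x) powr p \<partial>M) = (\<integral>x. \<bar>c\<bar> powr p * norm (f x) powr p \<partial>M)"
    by (simp add: powr_mult)
  also have "\<dots> = \<bar>c\<bar> powr p * (\<integral>x. norm (f x) powr p \<partial>M)" by (rule integral_mult_right_zero)
  finally have e: "(\<integral>x. norm (c *\<^sub>R f x) powr p \<partial>M) = \<bar>c\<bar> powr p * (\<integral>x. norm (f x) powr p \<partial>M)" .
  have I0: "(\<integral>x. norm (f x) powr p \<partial>M) \<ge> 0" by (simp add: integral_nonneg)
  show ?thesis unfolding Lp_norm_def e using I0 p
    by (simp add: powr_mult powr_powr)
qed

lemma Lp_norm_nonneg: "Lp_norm M p f \<ge> 0"
  by (simp add: Lp_norm_def)

lemma opnorm_bound: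
  fixes T :: "('a \<Rightarrow> 'v::{banach, second_countable_topology}) \<Rightarrow> ('a \<Rightarrow> 'v)"
  assumes p: "p > 0" and op: "Lp_opnorm M p T \<le> ennreal q" and q: "q \<ge> 0"
    and hom: "\<And>c h. T (\<lambda>x. c *\<^sub>R h x) = (\<lambda>x. c *\<^sub>R T h x)"
    and h: "memLp M p h"
  shows "Lp_norm M p (T h) \<le> q * Lp_norm M p h"
proof -
  have k: "Lp_norm M p (T h') \<le> q" if "memLp M p h'" "Lp_norm M p h' \<le> 1" for h'
  proof -
    have "ennreal (Lp_norm M p (T h')) \<le> Lp_opnorm M p T"
      unfolding Lp_opnorm_def by (rule SUP_upper) (use that in simp)
    also have "\<dots> \<le> ennreal q" by (rule op)
    finally show ?thesis using q by (simp add: ennreal_le_iff)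
  qed
  have sc: "Lp_norm M p (T (\<lambda>x. c *\<^sub>R h x)) = \<bar>c\<bar> * Lp_norm M p (T h)" for c
    unfolding hom by (rule Lp_norm_scale[OF p])
  have mc: "memLp M p (\<lambda>x. c *\<^sub>R h x)" for c by (rule memLp_scale[OF h p])
  show ?thesis
  proof (cases "Lp_norm M p h > 0")
    case True
    define c where "c = 1 / Lp_norm M p h"
    have c0: "c > 0" using True by (simp add: c_def)
    have "Lp_norm M p (\<lambda>x. c *\<^sub>R h x) = 1"
      using True p by (simp add: Lp_norm_scale c_def)
    then have "Lp_norm M p (T (\<lambda>x. c *\<^sub>R h x)) \<le> q" using k[OF mc] by simp
    then have "c * Lp_norm M p (T h) \<le> q" using c0 by (simp add: sc)
    then show ?thesis using True by (simp add: c_def field_simps)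
  next
    case False
    then have h0: "Lp_norm M p h = 0" using Lp_norm_nonneg[of M p h] by simp
    show ?thesis
    proof (rule ccontr)
      assume "\<not> ?thesis"
      then have pos: "Lp_norm M p (T h) > 0" using h0 by simp
      define c where "c = (q + 1) / Lp_norm M p (T h)"
      have c0: "c > 0" using pos q by (simp add: c_def)
      have "Lp_norm M p (\<lambda>x. c *\<^sub>R h x) = 0" using p h0 by (simp add: Lp_norm_scale)
      then have "Lp_norm M p (T (\<lambda>x. c *\<^sub>R h x)) \<le> q" using k[OF mc] by simp
      then have "c * Lp_norm M p (T h) \<le> q" using c0 by (simp add: sc)
      moreover have "c * Lp_norm M p (T h) = q + 1" using pos by (simp add: c_def)
      ultimately show False by simp
    qed
  qed
qed

lemma pi_p_hom: "pi_p \<pi>0 g (\<lambda>x. c *\<^sub>R h x) = (\<lambda>x. c *\<^sub>R pi_p \<pi>0 g h x)"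
  by (simp add: pi_p_def blinfun.scaleR_right)

locale lp_setting = haar M for M :: "'g::{topological_group_add, t2_space, second_countable_topology} measure" +
  fixes \<pi>0 :: "'g \<Rightarrow> ('v::{banach, second_countable_topology} \<Rightarrow>\<^sub>L 'v)" and p :: real
  assumes p1: "p > 1"
begin

lemma p0: "p > 0" using p1 by simp

lemma pi_meas: "h \<in> borel_measurable M \<Longrightarrow> pi_p \<pi>0 g h \<in> borel_measurable M"
proof -
  assume h: "h \<in> borel_measurable M"
  have "(\<lambda>x. h (x + g)) \<in> borel_measurable M"
    by (rule measurable_compose[OF cont_measM h]) (intro continuous_intros)
  moreover have "continuous_on UNIV (blinfun_apply (\<pi>0 g))"
    by (rule linear_continuous_on) (rule blinfun.bounded_linear_right)
  ultimately have "(\<lambda>x. blinfun_apply (\<pi>0 g) (h (x + g))) \<in> borel_measurable M"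
    by (rule borel_measurable_continuous_on[rotated])
  then show ?thesis by (simp add: pi_p_def[abs_def])
qed

lemma Q_trans: "\<exists>C. C < \<infinity> \<and> (\<forall>h. h \<in> borel_measurable M \<longrightarrow> Q M p (pi_p \<pi>0 g h) \<le> C * Q M p h)"
proof -
  obtain r where r: "r < \<infinity>" "\<And>F. F \<in> borel_measurable borel \<Longrightarrow> (\<integral>\<^sup>+x. F (x + g) \<partial>M) = r * integral\<^sup>N M F"
    using right_trans[of g] by blast
  show ?thesis
  proof (intro exI conjI allI impI)
    show "ennreal (norm (\<pi>0 g) powr p) * r < \<infinity>" using r(1) by (simp add: ennreal_mult_less_top)
    fix h :: "'g \<Rightarrow> 'v" assume h: "h \<in> borel_measurable M"
    have F: "(\<lambda>y. ennreal (norm (h y) powr p)) \<in> borel_measurable borel"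
      using h unfolding measM by measurable
    have "Q M p (pi_p \<pi>0 g h) \<le> (\<integral>\<^sup>+x. ennreal (norm (\<pi>0 g) powr p) * ennreal (norm (h (x + g)) powr p) \<partial>M)"
      unfolding Q_def pi_p_def
    proof (rule nn_integral_mono)
      fix x
      have "norm (blinfun_apply (\<pi>0 g) (h (x + g))) powr p \<le> (norm (\<pi>0 g) * norm (h (x + g))) powr p"
        using p0 by (intro powr_mono2 norm_blinfun) auto
      also have "\<dots> = norm (\<pi>0 g) powr p * norm (h (x + g)) powr p" by (simp add: powr_mult)
      finally show "ennreal (norm (blinfun_apply (\<pi>0 g) (h (x + g))) powr p) \<le> ennreal (norm (\<pi>0 g) powr p) * ennreal (norm (h (x + g)) powr p)"
        by (simp add: ennreal_mult[symmetric] ennreal_leI)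
    qed
    also have "\<dots> = ennreal (norm (\<pi>0 g) powr p) * (\<integral>\<^sup>+x. ennreal (norm (h (x + g)) powr p) \<partial>M)"
    proof (rule nn_integral_cmult)
      show "(\<lambda>x. ennreal (norm (h (x + g)) powr p)) \<in> borel_measurable M"
        unfolding measM by (rule cmeas[OF _ F]) (intro continuous_intros)
    qed
    also have "(\<integral>\<^sup>+x. ennreal (norm (h (x + g)) powr p) \<partial>M) = r * Q M p h"
      unfolding Q_def by (rule r(2)[OF F])
    finally show "Q M p (pi_p \<pi>0 g h) \<le> ennreal (norm (\<pi>0 g) powr p) * r * Q M p h"
      by (simp add: mult.assoc)
  qed
qed

lemma memLp_trans: "memLp M p h \<Longrightarrow> memLp M p (pi_p \<pi>0 g h)"
proof -
  assume h: "memLp M p h"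
  then have hm: "h \<in> borel_measurable M" and hq: "Q M p h < \<infinity>" by (auto simp: memLp_iff)
  obtain C where C: "C < \<infinity>" "\<And>h. h \<in> borel_measurable M \<Longrightarrow> Q M p (pi_p \<pi>0 g h) \<le> C * Q M p h"
    using Q_trans[of g] by blast
  have "Q M p (pi_p \<pi>0 g h) \<le> C * Q M p h" by (rule C(2)[OF hm])
  also have "\<dots> < \<infinity>" using C(1) hq by (simp add: ennreal_mult_less_top)
  finally show ?thesis using pi_meas[OF hm] by (simp add: memLp_iff)
qed

lemma AE_shift:
  assumes "AE x in M. P x"
  shows "AE x in M. P (x + g)"
proof -
  obtain N where N: "{x \<in> space M. \<not> P x} \<subseteq> N" "emeasure M N = 0" "N \<in> sets M"
    using assms by (rule AE_E)
  obtain r where r: "r < \<infinity>" "\<And>F. F \<in> borel_measurable borel \<Longrightarrow> (\<integral>\<^sup>+x. F (x + g) \<partial>M) = r * integral\<^sup>N M F"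
    using right_trans[of g] by blast
  define N' where "N' = (\<lambda>x. x + g) -` N \<inter> space M"
  have N'm: "N' \<in> sets M" unfolding N'_def
    by (rule measurable_sets[OF cont_measM N(3)]) (intro continuous_intros)
  have Nb: "N \<in> sets borel" using N(3) sM by simp
  have "emeasure M N' = (\<integral>\<^sup>+x. indicator N' x \<partial>M)" by (simp add: N'm)
  also have "\<dots> = (\<integral>\<^sup>+x. indicator N (x + g) \<partial>M)"
    by (rule nn_integral_cong) (simp add: N'_def spM indicator_def)
  also have "\<dots> = r * integral\<^sup>N M (indicator N)" by (rule r(2)) (use Nb in simp)
  also have "\<dots> = 0" using N(2,3) by simp
  finally have "N' \<in> null_sets M" using N'm by (simp add: null_sets_def)
  moreover have "{x \<in> space M. \<not> P (x + g)} \<subseteq> N'" using N(1) by (auto simp: N'_def spM)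
  ultimately show ?thesis by (rule AE_I')
qed

end


lemma ennreal_absorb:
  fixes x a :: ennreal
  assumes "x \<le> a + ennreal r * x" "x < \<infinity>" "0 \<le> r" "r < 1"
  shows "x \<le> ennreal (1 / (1 - r)) * a"
proof (cases a rule: ennreal_cases)
  case (real A)
  obtain X where X: "x = ennreal X" "X \<ge> 0" using assms(2) by (cases x rule: ennreal_cases) auto
  have "ennreal X \<le> ennreal (A + r * X)" using assms(1) real X assms(3)
    by (simp add: ennreal_mult[symmetric] ennreal_plus[symmetric] del: ennreal_plus)
  moreover have "0 \<le> A + r * X" using real X assms(3) by simp
  ultimately have "X \<le> A + r * X" by (simp add: ennreal_le_iff del: ennreal_plus)
  then have "X * (1 - r) \<le> A" by (simp add: algebra_simps)
  then have "X \<le> A / (1 - r)" using assms(4) by (simp add: field_simps)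
  then have "ennreal X \<le> ennreal (1 / (1 - r) * A)" by (simp add: ennreal_leI)
  also have "\<dots> = ennreal (1 / (1 - r)) * ennreal A" by (rule ennreal_mult') (use assms(4) in simp)
  finally show ?thesis using X real by simp
next
  case top
  have "1 / (1 - r) > 0" using assms(4) by simp
  then show ?thesis using top by (simp add: ennreal_mult_top)
qed

context lp_setting
begin

lemma T_contract:
  fixes h :: "'g \<Rightarrow> 'v"
  assumes op: "Lp_opnorm M p (pi_p \<pi>0 t) \<le> ennreal (1/4)" and h: "memLp M p h"
  shows "Q M p (pi_p \<pi>0 t h) \<le> ennreal ((1/4) powr p) * Q M p h"
proof -
  have b: "Lp_norm M p (pi_p \<pi>0 t h) \<le> 1/4 * Lp_norm M p h"
    by (rule opnorm_bound[OF p0 op _ _ h]) (simp_all add: pi_p_hom)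
  have "Q M p (pi_p \<pi>0 t h) = ennreal (Lp_norm M p (pi_p \<pi>0 t h) powr p)"
    by (rule Q_Lp[OF memLp_trans[OF h] p0])
  also have "\<dots> \<le> ennreal ((1/4 * Lp_norm M p h) powr p)"
    by (intro ennreal_leI powr_mono2 b) (simp_all add: Lp_norm_nonneg p0 less_imp_le)
  also have "\<dots> = ennreal ((1/4) powr p) * ennreal (Lp_norm M p h powr p)"
    by (simp only: powr_mult ennreal_mult'[OF powr_ge_zero])
  also have "ennreal (Lp_norm M p h powr p) = Q M p h" by (rule Q_Lp[OF h p0, symmetric])
  finally show ?thesis .
qed

lemma theta: "2 powr p * (1/4) powr p \<le> 1/2"
proof -
  have "2 powr p * (1/4) powr p = (1/2) powr p" by (simp add: powr_mult[symmetric])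
  also have "\<dots> \<le> 1/2" by (rule powr_le_one_le) (use p1 in auto)
  finally show ?thesis .
qed

lemma fixed_point:
  fixes \<beta> :: "'g \<Rightarrow> 'v"
  assumes op: "Lp_opnorm M p (pi_p \<pi>0 t) \<le> ennreal (1/4)" and \<beta>: "memLp M p \<beta>"
  shows "\<exists>f. memLp M p f \<and> (AE x in M. f x - pi_p \<pi>0 t f x = \<beta> x)"
proof -
  define T where "T = pi_p \<pi>0 t"
  define d where "d j = (T ^^ j) \<beta>" for j
  define \<theta> where "\<theta> = (1/4::real) powr p"
  have th0: "\<theta> \<ge> 0" by (simp add: \<theta>_def)
  have dS: "d (Suc j) = T (d j)" for j by (simp add: d_def)
  have dL: "memLp M p (d j)" for j
    by (induction j) (simp_all add: d_def \<beta> T_def memLp_trans)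
  have dm: "d j \<in> borel_measurable M" for j using dL[of j] by (simp add: memLp_iff)
  obtain Cb where Cb: "Q M p \<beta> = ennreal Cb" "Cb \<ge> 0"
    using \<beta> by (cases "Q M p \<beta>" rule: ennreal_cases) (auto simp: memLp_iff)
  have dQ: "Q M p (d j) \<le> ennreal (\<theta> ^ j * Cb)" for j
  proof (induction j)
    case 0 then show ?case by (simp add: d_def Cb)
  next
    case (Suc j)
    have "Q M p (d (Suc j)) \<le> ennreal \<theta> * Q M p (d j)"
      unfolding dS T_def \<theta>_def by (rule T_contract[OF op dL])
    also have "\<dots> \<le> ennreal \<theta> * ennreal (\<theta> ^ j * Cb)" by (rule mult_left_mono[OF Suc]) simp
    also have "\<dots> = ennreal (\<theta> * (\<theta> ^ j * Cb))" by (rule ennreal_mult'[OF th0, symmetric])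
    also have "\<dots> = ennreal (\<theta> ^ Suc j * Cb)" by (simp add: mult.assoc)
    finally show ?case .
  qed
  have dQ2: "ennreal ((2 powr p) ^ j) * Q M p (d j) \<le> ennreal (Cb * (1/2) ^ j)" for j
  proof -
    have "ennreal ((2 powr p) ^ j) * Q M p (d j) \<le> ennreal ((2 powr p) ^ j) * ennreal (\<theta> ^ j * Cb)"
      by (rule mult_left_mono[OF dQ]) simp
    also have "\<dots> = ennreal ((2 powr p * \<theta>) ^ j * Cb)"
      using th0 Cb(2) by (simp add: ennreal_mult[symmetric] power_mult_distrib mult.assoc)
    also have "\<dots> \<le> ennreal ((1/2) ^ j * Cb)"
    proof (rule ennreal_leI, rule mult_right_mono[OF _ Cb(2)], rule power_mono)
      show "2 powr p * \<theta> \<le> 1/2" unfolding \<theta>_def by (rule theta)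
      show "0 \<le> 2 powr p * \<theta>" using th0 by simp
    qed
    finally show ?thesis by (simp add: mult.commute)
  qed
  have S: "AE x in M. summable (\<lambda>j. norm (d j x))" and fL: "memLp M p (\<lambda>x. \<Sum>j. d j x)"
    using series_Lp[OF p0 dm dQ2 Cb(2)] by auto
  define f where "f x = (\<Sum>j. d j x)" for x
  have S': "AE x in M. summable (\<lambda>j. norm (d j (x + t)))" by (rule AE_shift[OF S])
  have "AE x in M. f x - pi_p \<pi>0 t f x = \<beta> x"
    using S S'
  proof eventually_elim
    case (elim x)
    have s1: "summable (\<lambda>j. d j x)" by (rule summable_norm_cancel[OF elim(1)])
    have s2: "summable (\<lambda>j. d j (x + t))" by (rule summable_norm_cancel[OF elim(2)])
    interpret bl: bounded_linear "blinfun_apply (\<pi>0 t)" by (rule blinfun.bounded_linear_right)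
    have "pi_p \<pi>0 t f x = blinfun_apply (\<pi>0 t) (\<Sum>j. d j (x + t))" by (simp add: pi_p_def f_def)
    also have "\<dots> = (\<Sum>j. blinfun_apply (\<pi>0 t) (d j (x + t)))" by (rule bl.suminf[OF s2])
    also have "\<dots> = (\<Sum>j. d (Suc j) x)" by (simp add: dS T_def pi_p_def)
    also have "\<dots> = f x - d 0 x" unfolding f_def by (rule suminf_split_head[OF s1])
    finally show ?case by (simp add: d_def)
  qed
  then show ?thesis using fL by (auto simp: f_def[abs_def])
qed

end


context lp_setting
begin

lemma Q_small:
  fixes h :: "'g \<Rightarrow> 'v"
  assumes "memLp M p h" "Lp_norm M p h < e"
  shows "Q M p h \<le> ennreal (e powr p)"
proof -
  have "Q M p h = ennreal (Lp_norm M p h powr p)" by (rule Q_Lp[OF assms(1) p0])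
  also have "\<dots> \<le> ennreal (e powr p)"
    using assms(2) by (intro ennreal_leI powr_mono2) (simp_all add: Lp_norm_nonneg p0 less_imp_le)
  finally show ?thesis .
qed

lemma Q_zero_of_small:
  assumes K: "K < \<infinity>" and sm: "\<And>\<epsilon>. \<epsilon> > 0 \<Longrightarrow> x \<le> K * ennreal \<epsilon>"
  shows "x = 0"
proof -
  obtain k where k: "K = ennreal k" "k \<ge> 0" using K by (cases K rule: ennreal_cases) auto
  have "x \<le> 0"
  proof (rule ennreal_le_epsilon)
    fix e :: real assume e: "0 < e"
    define \<epsilon> where "\<epsilon> = e / (k + 1)"
    have \<epsilon>0: "\<epsilon> > 0" using e k by (simp add: \<epsilon>_def)
    have "x \<le> K * ennreal \<epsilon>" by (rule sm[OF \<epsilon>0])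
    also have "\<dots> = ennreal (k * \<epsilon>)" using k \<epsilon>0 by (simp add: ennreal_mult)
    also have "k * \<epsilon> \<le> e" using e k by (simp add: \<epsilon>_def field_simps)
    then have "ennreal (k * \<epsilon>) \<le> 0 + ennreal e" by (simp add: ennreal_leI)
    finally show "x \<le> 0 + ennreal e" .
  qed
  then show ?thesis by simp
qed

lemma main:
  fixes b :: "'g \<Rightarrow> 'g \<Rightarrow> 'v"
  assumes op: "Lp_opnorm M p (pi_p \<pi>0 t) \<le> ennreal (1/4)"
    and bL: "\<And>g. memLp M p (b g)"
    and clo: "in_closure_B1 M p \<pi>0 b"
  shows "coboundary M p \<pi>0 b"
proof -
  obtain f where fL: "memLp M p f" and ff: "AE x in M. f x - pi_p \<pi>0 t f x = b t x"
    using fixed_point[OF op bL] by blast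
  define P where "P = ennreal (2 powr p)"
  show ?thesis unfolding coboundary_def
  proof (intro exI conjI allI)
    show "memLp M p f" by fact
    fix g
    define c where "c x = b g x - (f x - pi_p \<pi>0 g f x)" for x
    have cL: "memLp M p c" unfolding c_def
      by (intro memLp_add bL fL memLp_trans p0)
    then have cm: "c \<in> borel_measurable M" by (simp add: memLp_iff)
    obtain Cg where Cg: "Cg < \<infinity>" "\<And>h. h \<in> borel_measurable M \<Longrightarrow> Q M p (pi_p \<pi>0 g h) \<le> Cg * Q M p h"
      using Q_trans[of g] by blast
    define K where "K = P * (1 + P * (ennreal (1 / (1 - 1/2)) * P + Cg * (ennreal (1 / (1 - 1/2)) * P)))"
    have K: "K < \<infinity>" using Cg(1) by (simp add: K_def P_def ennreal_mult_less_top)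
    have sm: "Q M p c \<le> K * ennreal \<epsilon>" if \<epsilon>: "\<epsilon> > 0" for \<epsilon>
    proof -
      define \<epsilon>' where "\<epsilon>' = \<epsilon> powr (1/p)"
      have \<epsilon>'0: "\<epsilon>' > 0" using \<epsilon> by (simp add: \<epsilon>'_def)
      have \<epsilon>'p: "\<epsilon>' powr p = \<epsilon>" using \<epsilon> p0 by (simp add: \<epsilon>'_def powr_powr)
      have cpt: "compact {g, t}" by simp
      have "\<exists>u. memLp M p u \<and> (\<forall>h\<in>{g, t}. Lp_norm M p (\<lambda>x. b h x - (u x - pi_p \<pi>0 h u x)) < \<epsilon>')"
        using clo[unfolded in_closure_B1_def, rule_format, OF cpt \<epsilon>'0] .
      then obtain u where uL: "memLp M p u"
        and ub0: "\<forall>h\<in>{g, t}. Lp_norm M p (\<lambda>x. b h x - (u x - pi_p \<pi>0 h u x)) < \<epsilon>'"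
        by (elim exE conjE)
      have ub: "\<And>h. h \<in> {g, t} \<Longrightarrow> Lp_norm M p (\<lambda>x. b h x - (u x - pi_p \<pi>0 h u x)) < \<epsilon>'"
        using ub0 by (rule bspec)
      define D where "D h x = b h x - (u x - pi_p \<pi>0 h u x)" for h x
      have DL: "memLp M p (D h)" for h unfolding D_def by (intro memLp_add bL uL memLp_trans p0)
      have DQ: "Q M p (D h) \<le> ennreal \<epsilon>" if "h \<in> {g, t}" for h
      proof -
        have "Lp_norm M p (D h) < \<epsilon>'" unfolding D_def[abs_def] using ub[OF that] by simp
        from Q_small[OF DL this] show ?thesis by (simp add: \<epsilon>'p)
      qed
      define e where "e x = u x - f x" for x
      have eL: "memLp M p e" unfolding e_def by (intro memLp_add uL fL p0)
      have em: "e \<in> borel_measurable M" using eL by (simp add: memLp_iff)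
      have eq_finite: "Q M p e < \<infinity>" using eL by (simp add: memLp_iff)
      define Te where "Te = pi_p \<pi>0 t e"
      have TeL: "memLp M p Te" unfolding Te_def by (rule memLp_trans[OF eL])
      have Tem: "Te \<in> borel_measurable M" using TeL by (simp add: memLp_iff)
      have eTe: "AE x in M. e x - Te x = - D t x"
        using ff
      proof eventually_elim
        case (elim x)
        have "e x - Te x = (u x - pi_p \<pi>0 t u x) - (f x - pi_p \<pi>0 t f x)"
          by (simp add: e_def Te_def pi_p_def blinfun.diff_right)
        then show ?case using elim by (simp add: D_def)
      qed
      have Q1: "Q M p (\<lambda>x. e x - Te x) \<le> ennreal \<epsilon>"
      proof -
        have "Q M p (\<lambda>x. e x - Te x) = Q M p (\<lambda>x. - D t x)" by (rule Q_cong[OF eTe])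
        also have "\<dots> = Q M p (D t)" by (rule Q_minus)
        also have "\<dots> \<le> ennreal \<epsilon>" by (rule DQ) simp
        finally show ?thesis .
      qed
      have Q2: "Q M p Te \<le> ennreal ((1/4) powr p) * Q M p e"
        unfolding Te_def by (rule T_contract[OF op eL])
      have "Q M p e = Q M p (\<lambda>x. (e x - Te x) + Te x)" by simp
      also have "\<dots> \<le> P * (Q M p (\<lambda>x. e x - Te x) + Q M p Te)"
        unfolding P_def by (rule Q_add[OF _ Tem p0]) (use em Tem in measurable)
      also have "\<dots> \<le> P * (ennreal \<epsilon> + ennreal ((1/4) powr p) * Q M p e)"
        by (intro mult_left_mono add_mono Q1 Q2) simp
      also have "\<dots> = P * ennreal \<epsilon> + (P * ennreal ((1/4) powr p)) * Q M p e"
        by (simp only: distrib_left mult.assoc)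
      also have "\<dots> = P * ennreal \<epsilon> + ennreal (2 powr p * (1/4) powr p) * Q M p e"
        unfolding P_def by (subst ennreal_mult') simp_all
      also have "\<dots> \<le> P * ennreal \<epsilon> + ennreal (1/2) * Q M p e"
        by (intro add_mono mult_right_mono ennreal_leI theta) simp_all
      finally have "Q M p e \<le> P * ennreal \<epsilon> + ennreal (1/2) * Q M p e" .
      then have Qe: "Q M p e \<le> ennreal (1 / (1 - 1/2)) * (P * ennreal \<epsilon>)"
        by (rule ennreal_absorb[OF _ eq_finite]) simp_all
      have ceq: "c x = D g x + (e x - pi_p \<pi>0 g e x)" for x
        by (simp add: c_def D_def e_def pi_p_def blinfun.diff_right algebra_simps)
      have Dgm: "D g \<in> borel_measurable M" using DL by (simp add: memLp_iff)
      have pem: "pi_p \<pi>0 g e \<in> borel_measurable M" by (rule pi_meas[OF em])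
      define R where "R = ennreal (1 / (1 - 1/2))"
      have Qe': "Q M p e \<le> R * (P * ennreal \<epsilon>)" using Qe by (simp add: R_def)
      have A: "Q M p c \<le> P * (Q M p (D g) + Q M p (\<lambda>x. e x - pi_p \<pi>0 g e x))"
      proof -
        have "Q M p c = Q M p (\<lambda>x. D g x + (e x - pi_p \<pi>0 g e x))"
          by (rule arg_cong[where f="Q M p"], rule ext, rule ceq)
        also have "\<dots> \<le> P * (Q M p (D g) + Q M p (\<lambda>x. e x - pi_p \<pi>0 g e x))"
          unfolding P_def by (rule Q_add[OF Dgm _ p0]) (use em pem in measurable)
        finally show ?thesis .
      qed
      have B: "Q M p (\<lambda>x. e x - pi_p \<pi>0 g e x) \<le> P * (Q M p e + Cg * Q M p e)"
      proof -
        have "Q M p (\<lambda>x. e x - pi_p \<pi>0 g e x) \<le> P * (Q M p e + Q M p (pi_p \<pi>0 g e))"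
          unfolding P_def by (rule Q_diff[OF em pem p0])
        also have "\<dots> \<le> P * (Q M p e + Cg * Q M p e)"
          by (intro mult_left_mono add_mono order_refl Cg(2)[OF em]) simp
        finally show ?thesis .
      qed
      have C: "Q M p (D g) \<le> ennreal \<epsilon>" by (rule DQ) simp
      have "Q M p c \<le> P * (ennreal \<epsilon> + P * (Q M p e + Cg * Q M p e))"
        using A B C by (meson add_mono dual_order.trans mult_left_mono zero_le)
      also have "\<dots> \<le> P * (ennreal \<epsilon> + P * (R * (P * ennreal \<epsilon>) + Cg * (R * (P * ennreal \<epsilon>))))"
        by (intro mult_left_mono add_mono order_refl Qe') simp_all
      also have "\<dots> = K * ennreal \<epsilon>"
        unfolding K_def R_def[symmetric] by (simp add: distrib_left distrib_right mult.assoc mult.commute mult.left_commute)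
      finally show ?thesis .
    qed
    have "Q M p c = 0" by (rule Q_zero_of_small[OF K sm])
    then have "AE x in M. c x = 0" by (rule Q_zero[OF cm p0])
    then show "AE x in M. b g x = f x - pi_p \<pi>0 g f x"
      by eventually_elim (simp add: c_def)
  qed
qed

end


theorem lemma2:
  fixes M :: "'g::{topological_group_add, t2_space, second_countable_topology} measure"
    and \<pi>0 :: "'g \<Rightarrow> ('v::{banach, second_countable_topology} \<Rightarrow>\<^sub>L 'v)"
    and p :: real
  assumes "locally_compact_space (euclidean :: 'g topology)"
    and "left_haar_measure M"
    and "continuous_rep \<pi>0"
    and "p > 1"
    and "\<exists>\<xi>. pi_p_contracting M p \<pi>0 \<xi>"
  shows "\<forall>b. cocycle M p \<pi>0 b \<and> in_closure_B1 M p \<pi>0 b \<longrightarrow> coboundary M p \<pi>0 b"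
proof (intro allI impI)
  fix b :: "'g \<Rightarrow> 'g \<Rightarrow> 'v"
  assume bb: "cocycle M p \<pi>0 b \<and> in_closure_B1 M p \<pi>0 b"
  interpret S: lp_setting M \<pi>0 p
    by (intro lp_setting.intro haar.intro lp_setting_axioms.intro assms(1,2,4))
  obtain \<xi> where c: "pi_p_contracting M p \<pi>0 \<xi>" using assms(5) by blast
  have "(\<lambda>n. Lp_opnorm M p (pi_p \<pi>0 (gpow \<xi> n))) \<longlonglongrightarrow> 0"
    using c by (simp add: pi_p_contracting_def)
  then have "eventually (\<lambda>n. Lp_opnorm M p (pi_p \<pi>0 (gpow \<xi> n)) < ennreal (1/4)) sequentially"
    by (rule order_tendstoD(2)) simp
  then obtain n where "Lp_opnorm M p (pi_p \<pi>0 (gpow \<xi> n)) < ennreal (1/4)"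
    by (auto simp: eventually_sequentially)
  then have op: "Lp_opnorm M p (pi_p \<pi>0 (gpow \<xi> n)) \<le> ennreal (1/4)" by simp
  have bL: "\<And>g. memLp M p (b g)" using bb by (simp add: cocycle_def)
  have clo: "in_closure_B1 M p \<pi>0 b" using bb by simp
  show "coboundary M p \<pi>0 b" by (rule S.main[OF op bL clo])
qed

end
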